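(* Let $G=(V,E)$ be a locally finite, connected, infinite graph. Then $p_{\mathrm{T,E}}\le p_{\mathrm{T,V}}$. If moreover $G$ has bounded degree, then $p_{\mathrm{T,E}}=p_{\mathrm{T,V}}$.
   Context: Fix a vertex $x$ (the thresholds do not depend on $x$). Consider Bernoulli$(p)$ bond percolation on $G$ (each edge open independently with probability $p$), with expectation $\mathbb{E}_p$; $C(x)$ is the open cluster of $x$, and $|C(x)|_V$, $|C(x)|_E$ denote its numbers of vertices and edges. Define $p_{\mathrm{T,V}}=\sup\{p\ge0:\mathbb{E}_p[|C(x)|_V]<\infty\}$ and $p_{\mathrm{T,E}}=\sup\{p\ge0:\mathbb{E}_p[|C(x)|_E]<\infty\}$. *)

theory Defs
  imports "HOL-Probability.Probability"
begin

definition simple_graph :: "'a set \<Rightarrow> 'a set set \<Rightarrow> bool" where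
  "simple_graph V E \<longleftrightarrow> (\<forall>e\<in>E. e \<subseteq> V \<and> card e = 2)"

definition adj :: "'a set set \<Rightarrow> ('a \<times> 'a) set" where
  "adj E = {(u, v). {u, v} \<in> E}"

definition graph_connected :: "'a set \<Rightarrow> 'a set set \<Rightarrow> bool" where
  "graph_connected V E \<longleftrightarrow> (\<forall>u\<in>V. \<forall>v\<in>V. (u, v) \<in> (adj E)\<^sup>*)"

definition locally_finite :: "'a set \<Rightarrow> 'a set set \<Rightarrow> bool" where
  "locally_finite V E \<longleftrightarrow> (\<forall>v\<in>V. finite {e\<in>E. v \<in> e})"

definition bounded_degree :: "'a set \<Rightarrow> 'a set set \<Rightarrow> bool" where
  "bounded_degree V E \<longleftrightarrow> (\<exists>D::nat. \<forall>v\<in>V. card {e\<in>E. v \<in> e} \<le> D)"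

text \<open>Bernoulli(p) bond percolation: product measure on configurations of the edges
  (an edge e is open in configuration \<omega> iff \<omega> e).\<close>

definition perc :: "'a set set \<Rightarrow> real \<Rightarrow> ('a set \<Rightarrow> bool) measure" where
  "perc E p = (\<Pi>\<^sub>M e\<in>E. measure_pmf (bernoulli_pmf p))"

definition open_adj :: "'a set set \<Rightarrow> ('a set \<Rightarrow> bool) \<Rightarrow> ('a \<times> 'a) set" where
  "open_adj E \<omega> = {(u, v). {u, v} \<in> E \<and> \<omega> {u, v}}"

definition cluster :: "'a set set \<Rightarrow> ('a set \<Rightarrow> bool) \<Rightarrow> 'a \<Rightarrow> 'a set" where
  "cluster E \<omega> x = {y. (x, y) \<in> (open_adj E \<omega>)\<^sup>*}"

definition cluster_edges :: "'a set set \<Rightarrow> ('a set \<Rightarrow> bool) \<Rightarrow> 'a \<Rightarrow> 'a set set" where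
  "cluster_edges E \<omega> x = {e\<in>E. \<omega> e \<and> e \<subseteq> cluster E \<omega> x}"

text \<open>Expected sizes (in [0, \<infinity>]; an infinite cluster has size \<infinity>).\<close>
definition exp_cluster_V :: "'a set set \<Rightarrow> real \<Rightarrow> 'a \<Rightarrow> ennreal" where
  "exp_cluster_V E p x = (\<integral>\<^sup>+ \<omega>. emeasure (count_space UNIV) (cluster E \<omega> x) \<partial>perc E p)"

definition exp_cluster_E :: "'a set set \<Rightarrow> real \<Rightarrow> 'a \<Rightarrow> ennreal" where
  "exp_cluster_E E p x = (\<integral>\<^sup>+ \<omega>. emeasure (count_space UNIV) (cluster_edges E \<omega> x) \<partial>perc E p)"

definition pT_V :: "'a set set \<Rightarrow> 'a \<Rightarrow> real" where
  "pT_V E x = Sup {p. 0 \<le> p \<and> p \<le> 1 \<and> exp_cluster_V E p x < \<infinity>}"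

definition pT_E :: "'a set set \<Rightarrow> 'a \<Rightarrow> real" where
  "pT_E E x = Sup {p. 0 \<le> p \<and> p \<le> 1 \<and> exp_cluster_E E p x < \<infinity>}"

end

theory Submission
  imports Defs
begin

lemma ennreal_le_minus_add: "(a::ennreal) \<le> a - c + c"
proof (cases "c \<le> a")
  case True then show ?thesis using ennreal_ineq_diff_add[OF True] by (simp add: add.commute)
next
  case False then show ?thesis by (simp add: add_increasing)
qed

lemma nn_integral_add_const_le:
  assumes "c < \<infinity>"
  shows "(\<integral>\<^sup>+ x. f x + c \<partial>M) \<le> integral\<^sup>N M f + c * emeasure M (space M)"
  unfolding nn_integral_def[of M "\<lambda>x. f x + c"]
proof (rule SUP_least)
  fix g assume "g \<in> {g. simple_function M g \<and> g \<le> (\<lambda>x. f x + c)}"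
  then have g: "simple_function M g" and gle: "\<And>x. g x \<le> f x + c" by (auto simp: le_fun_def)
  define h where "h = (\<lambda>x. g x - c)"
  have hs: "simple_function M h" unfolding h_def using simple_function_compose[OF g, of "\<lambda>y. y - c"]
    by (simp add: o_def)
  have hle: "h \<le> f" unfolding h_def le_fun_def
  proof (intro allI)
    fix x show "g x - c \<le> f x"
      using ennreal_minus_le_iff[of "g x" c "f x"] gle[of x] assms by (auto simp: add.commute)
  qed
  have hs2: "simple_function M (\<lambda>x. h x + c)" by (rule simple_function_add[OF hs]) auto
  have "integral\<^sup>S M g \<le> integral\<^sup>S M (\<lambda>x. h x + c)"
    by (rule simple_integral_mono[OF g hs2]) (simp add: h_def ennreal_le_minus_add)
  also have "\<dots> = integral\<^sup>S M h + c * emeasure M (space M)"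
    using hs by (subst simple_integral_add) auto
  also have "integral\<^sup>S M h \<le> integral\<^sup>N M f"
    unfolding nn_integral_def using hs hle by (auto intro!: SUP_upper)
  finally show "integral\<^sup>S M g \<le> integral\<^sup>N M f + c * emeasure M (space M)"
    by (simp add: add_right_mono)
qed

lemma nn_integral_cmult_le:
  assumes "c < \<infinity>"
  shows "(\<integral>\<^sup>+ x. c * f x \<partial>M) \<le> c * integral\<^sup>N M f"
proof (cases "c = 0")
  case True then show ?thesis by simp
next
  case False
  show ?thesis
  unfolding nn_integral_def[of M "\<lambda>x. c * f x"]
  proof (rule SUP_least)
    fix g assume "g \<in> {g. simple_function M g \<and> g \<le> (\<lambda>x. c * f x)}"
    then have g: "simple_function M g" and gle: "\<And>x. g x \<le> c * f x" by (auto simp: le_fun_def)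
    define h where "h = (\<lambda>x. g x / c)"
    have hs: "simple_function M h" unfolding h_def using simple_function_compose[OF g, of "\<lambda>y. y / c"]
      by (simp add: o_def)
    have hle: "h \<le> f" unfolding h_def le_fun_def
      using gle False assms
      by (intro allI divide_le_posI_ennreal) (auto simp: zero_less_iff_neq_zero)
    have geq: "g = (\<lambda>x. c * h x)" unfolding h_def
    proof (rule ext)
      fix x show "g x = c * (g x / c)"
        using ennreal_mult_divide_eq[of c "g x"] False assms
        by (simp add: ennreal_times_divide mult.commute)
    qed
    have "integral\<^sup>S M g = c * integral\<^sup>S M h" unfolding geq using hs by simp
    also have "integral\<^sup>S M h \<le> integral\<^sup>N M f"
      unfolding nn_integral_def using hs hle by (auto intro!: SUP_upper)
    finally show "integral\<^sup>S M g \<le> c * integral\<^sup>N M f"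
      by (simp add: mult_left_mono)
  qed
qed

lemma open_adj_sym: "(u, v) \<in> open_adj E \<omega> \<Longrightarrow> (v, u) \<in> open_adj E \<omega>"
  unfolding open_adj_def by (auto simp: insert_commute)

definition cdist :: "'a set set \<Rightarrow> ('a set \<Rightarrow> bool) \<Rightarrow> 'a \<Rightarrow> 'a \<Rightarrow> nat" where
  "cdist E \<omega> x y = (LEAST n. (x, y) \<in> (open_adj E \<omega>) ^^ n)"

lemma parent_ex:
  assumes "y \<in> cluster E \<omega> x" "y \<noteq> x"
  shows "\<exists>u. (u, y) \<in> open_adj E \<omega> \<and> u \<in> cluster E \<omega> x \<and> Suc (cdist E \<omega> x u) = cdist E \<omega> x y"
proof -
  let ?R = "open_adj E \<omega>"
  have "\<exists>n. (x, y) \<in> ?R ^^ n" using assms(1) unfolding cluster_def by (simp add: rtrancl_power)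
  then have yn: "(x, y) \<in> ?R ^^ cdist E \<omega> x y" unfolding cdist_def by (rule LeastI_ex)
  obtain m where m: "cdist E \<omega> x y = Suc m"
    using yn assms(2) by (cases "cdist E \<omega> x y") auto
  from yn obtain u where xu: "(x, u) \<in> ?R ^^ m" and uy: "(u, y) \<in> ?R"
    unfolding m by auto
  have uC: "u \<in> cluster E \<omega> x" using xu unfolding cluster_def
    using relpow_imp_rtrancl by blast
  have du: "cdist E \<omega> x u \<le> m" unfolding cdist_def using xu by (rule Least_le)
  have "(x, u) \<in> ?R ^^ cdist E \<omega> x u" unfolding cdist_def by (rule LeastI[of _ m]) (rule xu)
  then have "(x, y) \<in> ?R ^^ Suc (cdist E \<omega> x u)" using uy by auto
  then have "cdist E \<omega> x y \<le> Suc (cdist E \<omega> x u)" unfolding cdist_def by (rule Least_le)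
  then have "Suc (cdist E \<omega> x u) = cdist E \<omega> x y" using du m by simp
  then show ?thesis using uy uC by blast
qed

definition parent :: "'a set set \<Rightarrow> ('a set \<Rightarrow> bool) \<Rightarrow> 'a \<Rightarrow> 'a \<Rightarrow> 'a" where
  "parent E \<omega> x y = (SOME u. (u, y) \<in> open_adj E \<omega> \<and> u \<in> cluster E \<omega> x \<and> Suc (cdist E \<omega> x u) = cdist E \<omega> x y)"

lemma parent:
  assumes "y \<in> cluster E \<omega> x" "y \<noteq> x"
  shows "(parent E \<omega> x y, y) \<in> open_adj E \<omega> \<and> parent E \<omega> x y \<in> cluster E \<omega> x
     \<and> Suc (cdist E \<omega> x (parent E \<omega> x y)) = cdist E \<omega> x y"
  unfolding parent_def by (rule someI_ex[OF parent_ex[OF assms]])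

lemma inj_parent_edge:
  "inj_on (\<lambda>y. {parent E \<omega> x y, y}) (cluster E \<omega> x - {x})"
proof (rule inj_onI)
  fix y z assume y: "y \<in> cluster E \<omega> x - {x}" and z: "z \<in> cluster E \<omega> x - {x}"
    and eq: "{parent E \<omega> x y, y} = {parent E \<omega> x z, z}"
  have py: "Suc (cdist E \<omega> x (parent E \<omega> x y)) = cdist E \<omega> x y" using parent[of y] y by auto
  have pz: "Suc (cdist E \<omega> x (parent E \<omega> x z)) = cdist E \<omega> x z" using parent[of z] z by auto
  show "y = z"
  proof (rule ccontr)
    assume "y \<noteq> z"
    then have "y = parent E \<omega> x z" "z = parent E \<omega> x y" using eq by (auto simp: doubleton_eq_iff)
    then show False using py pz by simp
  qed
qed

lemma parent_edge_in:
  assumes "y \<in> cluster E \<omega> x - {x}"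
  shows "{parent E \<omega> x y, y} \<in> cluster_edges E \<omega> x"
  using parent[of y E \<omega> x] assms unfolding cluster_edges_def open_adj_def by auto

lemma cluster_V_le:
  "emeasure (count_space UNIV) (cluster E \<omega> x) \<le> emeasure (count_space UNIV) (cluster_edges E \<omega> x) + 1"
proof (cases "finite (cluster_edges E \<omega> x)")
  case False
  then have "emeasure (count_space UNIV) (cluster_edges E \<omega> x) = \<infinity>"
    by (rule emeasure_count_space_infinite[OF subset_UNIV])
  then show ?thesis unfolding infinity_ennreal_def by (simp only: add_top_left_ennreal top_greatest)
next
  case True
  let ?f = "\<lambda>y. {parent E \<omega> x y, y}"
  have sub: "?f ` (cluster E \<omega> x - {x}) \<subseteq> cluster_edges E \<omega> x" by (rule image_subsetI) (rule parent_edge_in)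
  have fin: "finite (cluster E \<omega> x - {x})"
    using finite_imageD[OF finite_subset[OF sub True] inj_parent_edge] .
  have c1: "card (cluster E \<omega> x - {x}) \<le> card (cluster_edges E \<omega> x)"
    using card_inj_on_le[OF inj_parent_edge sub True] .
  have finC: "finite (cluster E \<omega> x)" using fin by simp
  have "card (cluster E \<omega> x) \<le> card (cluster E \<omega> x - {x}) + 1"
    using finC by (cases "x \<in> cluster E \<omega> x") (auto simp: card_Diff_singleton_if)
  then have "card (cluster E \<omega> x) \<le> card (cluster_edges E \<omega> x) + 1" using c1 by simp
  then have "of_nat (card (cluster E \<omega> x)) \<le> (of_nat (card (cluster_edges E \<omega> x) + 1) :: ennreal)"
    by (simp only: of_nat_le_iff)
  then have "of_nat (card (cluster E \<omega> x)) \<le> (of_nat (card (cluster_edges E \<omega> x)) + 1 :: ennreal)"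
    by (simp only: of_nat_add of_nat_1)
  then show ?thesis
    by (subst emeasure_count_space_finite[OF _ finC], simp, subst emeasure_count_space_finite[OF _ True], simp)
qed


lemma cluster_subset_V:
  assumes "simple_graph V E" "x \<in> V"
  shows "cluster E \<omega> x \<subseteq> V"
proof
  fix y assume y: "y \<in> cluster E \<omega> x"
  show "y \<in> V"
  proof (cases "y = x")
    case True then show ?thesis using assms by simp
  next
    case False
    then have "(parent E \<omega> x y, y) \<in> open_adj E \<omega>" using parent[OF y] by blast
    then have "{parent E \<omega> x y, y} \<in> E" unfolding open_adj_def by simp
    then show ?thesis using assms(1) unfolding simple_graph_def by blast
  qed
qed

lemma cluster_E_le:
  assumes sg: "simple_graph V E" and lf: "locally_finite V E" and xV: "x \<in> V"
    and D: "\<forall>v\<in>V. card {e\<in>E. v \<in> e} \<le> D"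
  shows "emeasure (count_space UNIV) (cluster_edges E \<omega> x)
     \<le> of_nat (Suc D) * emeasure (count_space UNIV) (cluster E \<omega> x)"
proof (cases "finite (cluster E \<omega> x)")
  case False
  then have "emeasure (count_space UNIV) (cluster E \<omega> x) = \<infinity>"
    by (rule emeasure_count_space_infinite[OF subset_UNIV])
  then show ?thesis by (simp add: ennreal_mult_top)
next
  case True
  let ?C = "cluster E \<omega> x"
  let ?S = "\<lambda>v. {e\<in>E. v \<in> e}"
  have CV: "?C \<subseteq> V" by (rule cluster_subset_V[OF sg xV])
  have sub: "cluster_edges E \<omega> x \<subseteq> (\<Union>v\<in>?C. ?S v)"
  proof
    fix e assume e: "e \<in> cluster_edges E \<omega> x"
    then have "e \<in> E" "e \<subseteq> ?C" unfolding cluster_edges_def by auto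
    moreover have "e \<noteq> {}" using \<open>e \<in> E\<close> sg unfolding simple_graph_def by fastforce
    ultimately show "e \<in> (\<Union>v\<in>?C. ?S v)" by blast
  qed
  have finS: "\<And>v. v \<in> ?C \<Longrightarrow> finite (?S v)" using CV lf unfolding locally_finite_def by blast
  have finU: "finite (\<Union>v\<in>?C. ?S v)" using True finS by blast
  have finCE: "finite (cluster_edges E \<omega> x)" using finite_subset[OF sub finU] .
  have "card (cluster_edges E \<omega> x) \<le> card (\<Union>v\<in>?C. ?S v)" by (rule card_mono[OF finU sub])
  also have "\<dots> \<le> (\<Sum>v\<in>?C. card (?S v))" by (rule card_UN_le[OF True])
  also have "\<dots> \<le> (\<Sum>v\<in>?C. D)" by (rule sum_mono) (use CV D in blast)
  also have "\<dots> \<le> Suc D * card ?C" by simp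
  finally have "of_nat (card (cluster_edges E \<omega> x)) \<le> (of_nat (Suc D * card ?C) :: ennreal)"
    by (simp only: of_nat_le_iff)
  then have "of_nat (card (cluster_edges E \<omega> x)) \<le> (of_nat (Suc D) * of_nat (card ?C) :: ennreal)"
    by (simp only: of_nat_mult)
  then show ?thesis
    by (subst emeasure_count_space_finite[OF _ True], simp, subst emeasure_count_space_finite[OF _ finCE], simp)
qed

lemma perc_prob: "prob_space (perc E p)"
  unfolding perc_def by (rule prob_space_PiM) (rule prob_space_measure_pmf)

lemma exp_V_le: "exp_cluster_V E p x \<le> exp_cluster_E E p x + 1"
proof -
  interpret prob_space "perc E p" by (rule perc_prob)
  have "exp_cluster_V E p x \<le> (\<integral>\<^sup>+ \<omega>. emeasure (count_space UNIV) (cluster_edges E \<omega> x) + 1 \<partial>perc E p)"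
    unfolding exp_cluster_V_def by (rule nn_integral_mono) (rule cluster_V_le)
  also have "\<dots> \<le> exp_cluster_E E p x + 1 * emeasure (perc E p) (space (perc E p))"
    unfolding exp_cluster_E_def by (rule nn_integral_add_const_le) simp
  finally show ?thesis by (simp add: emeasure_space_1)
qed

lemma exp_E_le:
  assumes sg: "simple_graph V E" and lf: "locally_finite V E" and xV: "x \<in> V"
    and D: "\<forall>v\<in>V. card {e\<in>E. v \<in> e} \<le> D"
  shows "exp_cluster_E E p x \<le> of_nat (Suc D) * exp_cluster_V E p x"
proof -
  have "exp_cluster_E E p x \<le> (\<integral>\<^sup>+ \<omega>. of_nat (Suc D) * emeasure (count_space UNIV) (cluster E \<omega> x) \<partial>perc E p)"
    unfolding exp_cluster_E_def by (rule nn_integral_mono) (rule cluster_E_le[OF assms])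
  also have "\<dots> \<le> of_nat (Suc D) * exp_cluster_V E p x"
    unfolding exp_cluster_V_def by (rule nn_integral_cmult_le) (simp only: infinity_ennreal_def of_nat_less_top)
  finally show ?thesis .
qed


lemma exp_E_zero:
  assumes sg: "simple_graph V E" and lf: "locally_finite V E" and xV: "x \<in> V"
  shows "exp_cluster_E E 0 x = 0"
proof -
  let ?M = "perc E 0"
  let ?Ex = "{e\<in>E. x \<in> e}"
  interpret P: product_prob_space "\<lambda>_::'a set. measure_pmf (bernoulli_pmf (0::real))" E
    by unfold_locales (simp add: prob_space_measure_pmf)
  have finEx: "finite ?Ex" using lf xV unfolding locally_finite_def by blast
  have ae1: "AE \<omega> in ?M. \<not> \<omega> e" if e: "e \<in> E" for e
  proof (rule AE_I')
    let ?N = "{\<omega>\<in>space ?M. \<omega> e \<in> {True}}"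
    have meas: "?N \<in> sets ?M"
    proof -
      have "?N = (\<lambda>\<omega>. \<omega> e) -` {True} \<inter> space ?M" by auto
      also have "\<dots> \<in> sets ?M" unfolding perc_def
        by (rule measurable_sets[OF measurable_component_singleton[OF e]]) simp
      finally show ?thesis .
    qed
    have "emeasure ?M ?N = emeasure (measure_pmf (bernoulli_pmf (0::real))) {True}"
      unfolding perc_def by (rule P.emeasure_PiM_Collect_single[OF e]) simp
    also have "\<dots> = 0" by (simp add: emeasure_pmf_single)
    finally show "?N \<in> null_sets ?M" using meas by (intro null_setsI) auto
    show "{\<omega> \<in> space ?M. \<not> \<not> \<omega> e} \<subseteq> ?N" by auto
  qed
  have ae: "AE \<omega> in ?M. \<forall>e\<in>?Ex. \<not> \<omega> e"
    by (rule AE_finite_allI[OF finEx]) (rule ae1, simp)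
  have "AE \<omega> in ?M. emeasure (count_space UNIV) (cluster_edges E \<omega> x) \<le> 0"
    using ae
  proof (rule AE_mp, intro AE_I2 impI)
    fix \<omega> assume cl: "\<forall>e\<in>?Ex. \<not> \<omega> e"
    have "cluster_edges E \<omega> x = {}"
    proof (rule ccontr)
      assume "cluster_edges E \<omega> x \<noteq> {}"
      then obtain e where e: "e \<in> E" "e \<subseteq> cluster E \<omega> x" unfolding cluster_edges_def by auto
      have "card e = 2" using e sg unfolding simple_graph_def by blast
      then obtain a b where ab: "e = {a, b}" "a \<noteq> b" by (auto simp: card_Suc_eq numeral_2_eq_2)
      then obtain y where y: "y \<in> e" "y \<noteq> x" by blast
      have "(x, y) \<in> (open_adj E \<omega>)\<^sup>*" using y e unfolding cluster_def by auto
      then obtain u where "(x, u) \<in> open_adj E \<omega>" using y(2) by (auto elim: converse_rtranclE)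
      then have "{x, u} \<in> ?Ex" "\<omega> {x, u}" unfolding open_adj_def by auto
      then show False using cl by blast
    qed
    then show "emeasure (count_space UNIV) (cluster_edges E \<omega> x) \<le> 0" by simp
  qed
  then have "exp_cluster_E E 0 x \<le> (\<integral>\<^sup>+ \<omega>. 0 \<partial>?M)"
    unfolding exp_cluster_E_def by (rule nn_integral_mono_AE)
  then show ?thesis by simp
qed

theorem lemma2p2:
  fixes V :: "'a set" and E :: "'a set set" and x :: 'a
  assumes "simple_graph V E"
    and "locally_finite V E"
    and "graph_connected V E"
    and "infinite V"
    and "x \<in> V"
  shows "pT_E E x \<le> pT_V E x \<and> (bounded_degree V E \<longrightarrow> pT_E E x = pT_V E x)"
proof -
  let ?AE = "{p. 0 \<le> p \<and> p \<le> 1 \<and> exp_cluster_E E p x < \<infinity>}"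
  let ?AV = "{p. 0 \<le> p \<and> p \<le> 1 \<and> exp_cluster_V E p x < \<infinity>}"
  have sub: "?AE \<subseteq> ?AV"
  proof
    fix p assume "p \<in> ?AE"
    then have "0 \<le> p \<and> p \<le> 1" "exp_cluster_E E p x < \<infinity>" by auto
    moreover have "exp_cluster_E E p x + 1 < \<infinity>" using calculation(2)
      by (simp add: infinity_ennreal_def)
    ultimately show "p \<in> ?AV" using exp_V_le[of E p x] by (auto intro: le_less_trans)
  qed
  have ne: "?AE \<noteq> {}"
  proof -
    have "(0::real) \<in> ?AE" using exp_E_zero[OF assms(1,2,5)] by simp
    then show ?thesis by blast
  qed
  have bdd: "bdd_above ?AV" by (rule bdd_aboveI[of _ 1]) auto
  have part1: "pT_E E x \<le> pT_V E x"
    unfolding pT_E_def pT_V_def by (rule cSup_subset_mono[OF ne bdd sub])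
  have part2: "pT_E E x = pT_V E x" if bd: "bounded_degree V E"
  proof -
    obtain D where D: "\<forall>v\<in>V. card {e\<in>E. v \<in> e} \<le> D" using bd unfolding bounded_degree_def by blast
    have "?AV \<subseteq> ?AE"
    proof
      fix p assume "p \<in> ?AV"
      then have "0 \<le> p \<and> p \<le> 1" "exp_cluster_V E p x < \<infinity>" by auto
      moreover have "of_nat (Suc D) * exp_cluster_V E p x < \<infinity>" using calculation(2)
        by (simp add: infinity_ennreal_def ennreal_mult_less_top of_nat_less_top)
      ultimately show "p \<in> ?AE" using exp_E_le[OF assms(1,2,5) D, of p] by (auto intro: le_less_trans)
    qed
    then have "?AE = ?AV" using sub by blast
    then show ?thesis unfolding pT_E_def pT_V_def by simp
  qed
  show ?thesis using part1 part2 by blast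
qed

end
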